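(* Let $L\ge1$ and widths $N_1,\dots,N_{L-1}$ with $\min\{N_l:l=1,\dots,L-1\}\ge D$. Then the union over $N_L\in\mathbb{N}_{>0}$ of the sets of sampled ReLU networks $\Phi\colon\mathcal{X}\to\mathbb{R}^{N_{L+1}}$ with $L$ hidden layers of widths $[N_1,\dots,N_{L-1},N_L]$ is dense in $C(\mathcal{X},\mathbb{R}^{N_{L+1}})$ with respect to the uniform norm.
   Context: Input space: Fix $D\ge1$, Euclidean norm and inner product on $\mathbb{R}^D$. For $A\subseteq\mathbb{R}^D$ let $d(z,A)=\inf_{a\in A}\|z-a\|$, $\mathrm{Med}(A)=\{z:\exists p\neq q\in A,\ \|p-z\|=\|q-z\|=d(z,A)\}$, reach $\tau_A=\inf_{a\in A}d(a,\mathrm{Med}(A))$. Let $\mathcal{X}'\subset\mathbb{R}^D$ be nonempty compact with $\tau_{\mathcal{X}'}>0$, fix $0<\epsilon_I<\min\{\tau_{\mathcal{X}'},1\}$, and $\mathcal{X}=\{x:d(x,\mathcal{X}')\le\epsilon_I\}$. Networks: with $\phi(t)=\max\{t,0\}$, $N_0=D$, a network computes $\Phi^{(0)}(x)=x$, $\Phi^{(l)}(x)=\phi(W_l\Phi^{(l-1)}(x)-b_l)$ for $l=1,\dots,L$, $\Phi(x)=W_{L+1}\Phi^{(L)}(x)-b_{L+1}$; $w_{l,i},b_{l,i}$ denote the $i$-th row of $W_l$ and entry of $b_l$. It is a sampled network if for all $l\le L$, $i\le N_l$ there are $x^{(1)}_{0,i},x^{(2)}_{0,i}\in\mathcal{X}$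 such that $x^{(j)}_{l-1,i}=\Phi^{(l-1)}(x^{(j)}_{0,i})$ are distinct and $w_{l,i}=\frac{x^{(2)}_{l-1,i}-x^{(1)}_{l-1,i}}{\|x^{(2)}_{l-1,i}-x^{(1)}_{l-1,i}\|^2}$, $b_{l,i}=\langle w_{l,i},x^{(1)}_{l-1,i}\rangle$; $W_{L+1},b_{L+1}$ are unrestricted. *)

theory Defs
  imports "HOL-Analysis.Analysis" "HOL-Library.Extended_Real"
begin

definition medial_axis :: "'a::euclidean_space set \<Rightarrow> 'a set" where
  "medial_axis A = {z. \<exists>p\<in>A. \<exists>q\<in>A. p \<noteq> q \<and>
      norm (p - z) = infdist z A \<and> norm (q - z) = infdist z A}"

definition reach :: "'a::euclidean_space set \<Rightarrow> ereal" where
  "reach A = (INF a\<in>A. if medial_axis A = {} then \<infinity> else ereal (infdist a (medial_axis A)))"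

text \<open>A fixed enumeration of the orthonormal basis, identifying the input space with R^D.\<close>
definition basis_enum :: "'a::euclidean_space list" where
  "basis_enum = (SOME bs. distinct bs \<and> set bs = Basis)"

definition coords :: "'a::euclidean_space \<Rightarrow> nat \<Rightarrow> real" where
  "coords x = (\<lambda>j. if j < DIM('a) then x \<bullet> (basis_enum ! j) else 0)"

definition relu :: "real \<Rightarrow> real" where
  "relu t = max t 0"

text \<open>Vectors of R^n are functions nat => real; only indices below n matter.\<close>
definition vinner :: "nat \<Rightarrow> (nat \<Rightarrow> real) \<Rightarrow> (nat \<Rightarrow> real) \<Rightarrow> real" where
  "vinner n u v = (\<Sum>j<n. u j * v j)"

definition vnorm :: "nat \<Rightarrow> (nat \<Rightarrow> real) \<Rightarrow> real" where
  "vnorm n u = sqrt (vinner n u u)"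

text \<open>Hidden layers: N l is the width of layer l (N 0 must be the input dimension),
  W l i is the i-th row of W_l, b l i the i-th entry of b_l.
  layer N W b l x = Phi^(l)(x); entries with index >= N l are set to 0.\<close>
fun layer :: "(nat \<Rightarrow> nat) \<Rightarrow> (nat \<Rightarrow> nat \<Rightarrow> nat \<Rightarrow> real) \<Rightarrow> (nat \<Rightarrow> nat \<Rightarrow> real)
    \<Rightarrow> nat \<Rightarrow> 'a::euclidean_space \<Rightarrow> nat \<Rightarrow> real" where
  "layer N W b 0 x = coords x"
| "layer N W b (Suc l) x = (\<lambda>i. if i < N (Suc l)
      then relu (vinner (N l) (W (Suc l) i) (layer N W b l x) - b (Suc l) i) else 0)"

text \<open>Network output with unrestricted last (affine) layer: W_{L+1} has columns c i, bias b0.\<close>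
definition net_out :: "(nat \<Rightarrow> nat) \<Rightarrow> (nat \<Rightarrow> nat \<Rightarrow> nat \<Rightarrow> real) \<Rightarrow> (nat \<Rightarrow> nat \<Rightarrow> real)
    \<Rightarrow> nat \<Rightarrow> (nat \<Rightarrow> 'b::real_vector) \<Rightarrow> 'b \<Rightarrow> 'a::euclidean_space \<Rightarrow> 'b" where
  "net_out N W b L c b0 x = (\<Sum>i<N L. layer N W b L x i *\<^sub>R c i) - b0"

definition is_sampled :: "'a::euclidean_space set \<Rightarrow> nat \<Rightarrow> (nat \<Rightarrow> nat)
    \<Rightarrow> (nat \<Rightarrow> nat \<Rightarrow> nat \<Rightarrow> real) \<Rightarrow> (nat \<Rightarrow> nat \<Rightarrow> real) \<Rightarrow> bool" where
  "is_sampled X L N W b \<longleftrightarrow>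
     (\<forall>l\<in>{1..L}. \<forall>i<N l. \<exists>x1\<in>X. \<exists>x2\<in>X.
        layer N W b (l - 1) x1 \<noteq> layer N W b (l - 1) x2 \<and>
        W l i = (\<lambda>j. (layer N W b (l - 1) x2 j - layer N W b (l - 1) x1 j) /
                   (vnorm (N (l - 1)) (\<lambda>k. layer N W b (l - 1) x2 k - layer N W b (l - 1) x1 k))\<^sup>2) \<and>
        b l i = vinner (N (l - 1)) (W l i) (layer N W b (l - 1) x1))"

end

theory Submission
  imports Defs
begin



definition PL :: "real \<Rightarrow> (real \<times> real) list \<Rightarrow> real \<Rightarrow> real" where
  "PL c ps t = c + sum_list (map (\<lambda>(a,s). a * relu (t - s)) ps)"

definition interp_prop :: "(real \<Rightarrow> real) \<Rightarrow> real set \<Rightarrow> real \<Rightarrow> (real \<times> real) list \<Rightarrow> bool" where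
  "interp_prop g S c ps \<longleftrightarrow> set (map snd ps) \<subseteq> S \<and>
     (\<forall>t. (t \<le> Min S \<longrightarrow> PL c ps t = g (Min S)) \<and> (Max S \<le> t \<longrightarrow> PL c ps t = g (Max S)) \<and>
       (Min S \<le> t \<and> t \<le> Max S \<longrightarrow> (\<exists>u\<in>S. \<exists>w\<in>S. u \<le> t \<and> t \<le> w \<and> (\<forall>z\<in>S. z \<le> u \<or> w \<le> z) \<and>
            PL c ps t = g u + (g w - g u) * ((t - u) / (w - u)))))"

lemma relu_neg: "x \<le> 0 \<Longrightarrow> relu x = 0" by (simp add: relu_def)
lemma relu_pos: "x \<ge> 0 \<Longrightarrow> relu x = x" by (simp add: relu_def)

lemma interp_exists:
  assumes "finite S" "S \<noteq> {}"
  shows "\<exists>c ps. interp_prop g S c ps"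
  using assms
proof (induction S rule: finite_linorder_max_induct)
  case empty then show ?case by simp
next
  case (insert b A)
  show ?case
  proof (cases "A = {}")
    case True
    have "interp_prop g {b} (g b) []"
      unfolding interp_prop_def PL_def by auto
    then show ?thesis using True by blast
  next
    case False
    then obtain c ps where IH: "interp_prop g A c ps" using insert by blast
    define m where "m = Max A"
    have mA: "m \<in> A" using False insert(1) m_def by simp
    have mb: "m < b" using mA insert(2) by auto
    have le_m: "\<And>z. z \<in> A \<Longrightarrow> z \<le> m" using insert(1) m_def by simp
    have MinS: "Min (insert b A) = Min A" using False insert mb le_m
      by (metis Min_insert Min_le mA min.absorb2 order.strict_trans1 less_imp_le)
    have MaxS: "Max (insert b A) = b" using False insert mb le_m
      by (simp add: max_absorb1 le_m less_imp_le m_def[symmetric])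
    have MinA_le: "Min A \<le> m" using insert(1) mA by simp
    define k where "k = (g b - g m) / (b - m)"
    define ps' where "ps' = ps @ [(k, m), (-k, b)]"
    have PL': "PL c ps' t = PL c ps t + k * relu (t - m) - k * relu (t - b)" for t
      unfolding ps'_def PL_def by simp
    have "interp_prop g (insert b A) c ps'"
      unfolding interp_prop_def MinS MaxS
    proof (intro conjI allI impI)
      show "set (map snd ps') \<subseteq> insert b A"
        using IH mA unfolding interp_prop_def ps'_def by auto
    next
      fix t assume "t \<le> Min A"
      then have "t \<le> m" "t \<le> b" using MinA_le mb by auto
      then show "PL c ps' t = g (Min A)" using IH \<open>t \<le> Min A\<close>
        unfolding PL' interp_prop_def by (simp add: relu_neg)
    next
      fix t assume "b \<le> t"
      then have "m \<le> t" using mb by auto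
      then have "PL c ps t = g m" using IH unfolding interp_prop_def m_def by simp
      moreover have "k * relu (t - m) - k * relu (t - b) = g b - g m"
      proof -
        have "k * relu (t - m) - k * relu (t - b) = k * (b - m)"
          using \<open>b \<le> t\<close> mb by (simp add: relu_pos algebra_simps)
        also have "\<dots> = g b - g m" unfolding k_def using mb by simp
        finally show ?thesis .
      qed
      ultimately show "PL c ps' t = g b" unfolding PL' by simp
    next
      fix t assume t: "Min A \<le> t \<and> t \<le> b"
      show "\<exists>u\<in>insert b A. \<exists>w\<in>insert b A. u \<le> t \<and> t \<le> w \<and> (\<forall>z\<in>insert b A. z \<le> u \<or> w \<le> z) \<and>
            PL c ps' t = g u + (g w - g u) * ((t - u) / (w - u))"
      proof (cases "t \<le> m")
        case True
        then obtain u w where uw: "u\<in>A" "w\<in>A" "u \<le> t" "t \<le> w" "\<forall>z\<in>A. z \<le> u \<or> w \<le> z"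
            "PL c ps t = g u + (g w - g u) * ((t - u) / (w - u))"
          using IH t unfolding interp_prop_def m_def by blast
        have "w \<le> b" using uw(2) insert(2) by auto
        moreover have "PL c ps' t = PL c ps t" unfolding PL' using True mb by (simp add: relu_neg)
        ultimately show ?thesis using uw by (intro bexI[of _ u] bexI[of _ w]) auto
      next
        case False
        have "PL c ps' t = g m + (g b - g m) * ((t - m) / (b - m))"
        proof -
          have "PL c ps t = g m" using IH False unfolding interp_prop_def m_def by simp
          then show ?thesis unfolding PL' k_def using False t by (simp add: relu_pos relu_neg)
        qed
        then show ?thesis using False t mA le_m
          by (intro bexI[of _ m] bexI[of _ b]) auto
      qed
    qed
    then show ?thesis by blast
  qed
qed

lemma pl_approx:
  fixes g :: "real \<Rightarrow> real"
  assumes K: "compact K" and TK: "T \<subseteq> K" and KT: "K \<subseteq> closure T"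
    and g: "continuous_on K g" and e: "e > 0"
  shows "\<exists>c ps. set (map snd ps) \<subseteq> T \<and> (\<forall>t\<in>K. \<bar>g t - PL c ps t\<bar> < e)"
proof (cases "K = {}")
  case True then show ?thesis by (intro exI[of _ 0] exI[of _ "[]"]) auto
next
  case Kne: False
  have "uniformly_continuous_on K g" using K g compact_uniformly_continuous by blast
  then obtain d where d: "d > 0" "\<And>x x'. x \<in> K \<Longrightarrow> x' \<in> K \<Longrightarrow> dist x' x < d \<Longrightarrow> dist (g x') (g x) < e/4"
    unfolding uniformly_continuous_on_def using e by (metis zero_less_divide_iff zero_less_numeral)
  have gd: "\<And>x x'. x \<in> K \<Longrightarrow> x' \<in> K \<Longrightarrow> \<bar>x' - x\<bar> < d \<Longrightarrow> \<bar>g x' - g x\<bar> < e/4"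
    using d(2) by (simp add: dist_real_def)
  have "bounded (g ` K)" using compact_continuous_image[OF g K] compact_imp_bounded by blast
  then obtain M where M: "M > 0" "\<And>x. x \<in> g ` K \<Longrightarrow> norm x \<le> M" unfolding bounded_pos by (auto simp del: real_norm_def)
  have gM: "\<And>x. x \<in> K \<Longrightarrow> \<bar>g x\<bar> \<le> M" using M(2) by auto
  define \<eta> where "\<eta> = min d (d * e / (8 * M))"
  have eta: "\<eta> > 0" "\<eta> \<le> d" "\<eta> \<le> d * e / (8 * M)" using d e M unfolding \<eta>_def by auto
  have cov: "K \<subseteq> (\<Union>s\<in>T. ball s \<eta>)"
  proof
    fix t assume "t \<in> K"
    then have "t \<in> closure T" using KT by auto
    then obtain s where "s \<in> T" "dist s t < \<eta>" using closure_approachable eta(1) by metis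
    then show "t \<in> (\<Union>s\<in>T. ball s \<eta>)" by auto
  qed
  obtain S where S: "S \<subseteq> T" "finite S" "K \<subseteq> (\<Union>s\<in>S. ball s \<eta>)"
    using compactE_image[OF K _ cov] by blast
  have Sne: "S \<noteq> {}" using S(3) Kne by auto
  have SK: "S \<subseteq> K" using S(1) TK by auto
  obtain c ps where I: "interp_prop g S c ps" using interp_exists[OF S(2) Sne] by blast
  have MinS: "Min S \<in> S" "Max S \<in> S" using S(2) Sne by auto
  have Sbd: "\<And>s. s \<in> S \<Longrightarrow> Min S \<le> s \<and> s \<le> Max S" using S(2) by auto
  have main: "\<bar>g t - PL c ps t\<bar> < e" if t: "t \<in> K" for t
  proof -
    obtain s where s: "s \<in> S" "\<bar>s - t\<bar> < \<eta>" using S(3) t by (auto simp: dist_real_def)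
    consider "t \<le> Min S" | "Max S \<le> t" | "Min S \<le> t \<and> t \<le> Max S" by linarith
    then show ?thesis
    proof cases
      case 1
      then have "PL c ps t = g (Min S)" using I unfolding interp_prop_def by blast
      moreover have "\<bar>Min S - t\<bar> < d" using 1 s Sbd[OF s(1)] eta by auto
      moreover have "Min S \<in> K" using MinS SK by auto
      ultimately have "\<bar>g (Min S) - g t\<bar> < e/4" using gd[of t "Min S"] t by auto
      then show ?thesis using \<open>PL c ps t = g (Min S)\<close> e by (simp add: abs_minus_commute)
    next
      case 2
      then have "PL c ps t = g (Max S)" using I unfolding interp_prop_def by blast
      moreover have "\<bar>Max S - t\<bar> < d" using 2 s Sbd[OF s(1)] eta by auto
      moreover have "Max S \<in> K" using MinS SK by auto
      ultimately have "\<bar>g (Max S) - g t\<bar> < e/4" using gd[of t "Max S"] t by auto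
      then show ?thesis using \<open>PL c ps t = g (Max S)\<close> e by (simp add: abs_minus_commute)
    next
      case 3
      then obtain u w where uw: "u\<in>S" "w\<in>S" "u \<le> t" "t \<le> w" "\<forall>z\<in>S. z \<le> u \<or> w \<le> z"
          "PL c ps t = g u + (g w - g u) * ((t - u) / (w - u))"
        using I unfolding interp_prop_def by blast
      define r where "r = (t - u) / (w - u)"
      have r01: "0 \<le> r" "r \<le> 1" using uw unfolding r_def by (auto simp: divide_simps)
      have uK: "u \<in> K" "w \<in> K" using uw SK by auto
      have near: "t - u < \<eta> \<or> w - t < \<eta>"
      proof -
        have "s \<le> u \<or> w \<le> s" using uw(5) s(1) by blast
        then show ?thesis using s(2) by auto
      qed
      have bu: "\<bar>g u\<bar> \<le> M" "\<bar>g w\<bar> \<le> M" using gM uK by auto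
      show ?thesis
      proof (cases "w - u < d")
        case True
        have A: "\<bar>g w - g u\<bar> < e/4" using gd[OF uK(1) uK(2)] True uw by auto
        have B: "\<bar>g u - g t\<bar> < e/4" using gd[OF t uK(1)] True uw by auto
        have "\<bar>(g w - g u) * r\<bar> \<le> \<bar>g w - g u\<bar>" using r01 by (simp add: abs_mult mult_left_le)
        then show ?thesis using A B uw(6) unfolding r_def by linarith
      next
        case False
        then have wu: "w - u \<ge> d" "w - u > 0" using d by auto
        have dd: "2 * M * (\<eta> / d) \<le> e / 4"
        proof -
          have "2 * M * (\<eta> / d) \<le> 2 * M * ((d * e / (8 * M)) / d)"
            using eta d M by (intro mult_left_mono divide_right_mono) auto
          also have "\<dots> = e / 4" using d M by (simp add: field_simps)
          finally show ?thesis .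
        qed
        from near show ?thesis
        proof
          assume tu: "t - u < \<eta>"
          have "r \<le> \<eta> / d"
          proof -
            have "r \<le> (t - u) / d" unfolding r_def using wu uw d by (intro divide_left_mono) auto
            also have "\<dots> \<le> \<eta> / d" using tu d by (simp add: divide_right_mono)
            finally show ?thesis .
          qed
          moreover have G: "\<bar>g w - g u\<bar> \<le> 2 * M" using abs_triangle_ineq4[of "g w" "g u"] bu by linarith
          ultimately have "\<bar>(g w - g u) * r\<bar> \<le> 2 * M * (\<eta> / d)"
            using r01 M(1) by (simp only: abs_mult) (metis abs_ge_zero abs_of_nonneg diff_ge_0_iff_ge mult_mono order_trans zero_le_mult_iff mult_nonneg_nonneg zero_le_numeral less_imp_le)
          moreover have "\<bar>g u - g t\<bar> < e/4" using gd[OF t uK(1)] tu eta uw by auto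
          ultimately show ?thesis using dd uw(6) unfolding r_def by linarith
        next
          assume wt: "w - t < \<eta>"
          have r1: "1 - r = (w - t) / (w - u)" unfolding r_def using wu by (simp add: field_simps)
          have "1 - r \<le> \<eta> / d"
          proof -
            have "1 - r \<le> (w - t) / d" unfolding r1 using wu uw d by (intro divide_left_mono) auto
            also have "\<dots> \<le> \<eta> / d" using wt d by (simp add: divide_right_mono)
            finally show ?thesis .
          qed
          moreover have G: "\<bar>g u - g w\<bar> \<le> 2 * M" using abs_triangle_ineq4[of "g u" "g w"] bu by linarith
          ultimately have "\<bar>(g u - g w) * (1 - r)\<bar> \<le> 2 * M * (\<eta> / d)"
            using r01 M(1) by (simp only: abs_mult) (metis abs_ge_zero abs_of_nonneg diff_ge_0_iff_ge mult_mono order_trans zero_le_mult_iff mult_nonneg_nonneg zero_le_numeral less_imp_le)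
          moreover have "\<bar>g w - g t\<bar> < e/4" using gd[OF t uK(2)] wt eta uw by auto
          moreover have "PL c ps t = g w + (g u - g w) * (1 - r)" using uw(6) unfolding r_def[symmetric]
            by (simp add: algebra_simps)
          ultimately show ?thesis using dd by linarith
        qed
      qed
    qed
  qed
  show ?thesis using I S(1) main unfolding interp_prop_def by blast
qed




lemma relu_scale: "l > 0 \<Longrightarrow> relu (l * y) = l * relu y"
  by (auto simp: relu_def max_def mult_le_0_iff zero_le_mult_iff)

locale samp =
  fixes X :: "'a::euclidean_space set" and B :: "'a \<Rightarrow> 'a \<Rightarrow> real"
  assumes X_compact: "compact X"
  and B_add1: "\<And>u v w. B (u + v) w = B u w + B v w"
  and B_scale1: "\<And>c u w. B (c *\<^sub>R u) w = c * B u w"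
  and B_diff2: "\<And>u w w'. B u (w - w') = B u w - B u w'"
  and B_scale2: "\<And>c u w. B u (c *\<^sub>R w) = c * B u w"
  and B_cont: "\<And>u. continuous_on UNIV (B u)"
  and B_pos: "\<And>u. u \<noteq> 0 \<Longrightarrow> B u u > 0"
  and dense: "\<And>u x0 \<eta>. u \<noteq> 0 \<Longrightarrow> x0 \<in> X \<Longrightarrow> \<eta> > 0 \<Longrightarrow>
       \<exists>x1\<in>X. \<exists>l>0. x1 + l *\<^sub>R u \<in> X \<and> \<bar>B u x1 - B u x0\<bar> < \<eta>"
begin

definition Pairs :: "('a \<times> 'a) set" where
  "Pairs = {(x1,x2). x1\<in>X \<and> x2\<in>X \<and> B (x2-x1) (x2-x1) > 0}"

definition nu :: "'a \<times> 'a \<Rightarrow> 'a \<Rightarrow> real" where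
  "nu p x = relu (B (snd p - fst p) (x - fst p)) / B (snd p - fst p) (snd p - fst p)"

definition SLin :: "('a \<Rightarrow> real) set" where
  "SLin = {q. \<exists>c ps. set (map fst ps) \<subseteq> Pairs \<and> q = (\<lambda>x. c + sum_list (map (\<lambda>(p,a). a * nu p x) ps))}"

definition App :: "('a \<Rightarrow> real) set" where
  "App = {h. \<forall>e>0. \<exists>q\<in>SLin. \<forall>x\<in>X. \<bar>h x - q x\<bar> < e}"

lemma B_zero1: "B 0 w = 0"
  using B_scale1[of 0] by simp

lemma SLin_const: "(\<lambda>x. c) \<in> SLin"
  unfolding SLin_def by (rule CollectI, rule exI[of _ c], rule exI[of _ "[]"]) auto

lemma SLin_add: "q1 \<in> SLin \<Longrightarrow> q2 \<in> SLin \<Longrightarrow> (\<lambda>x. q1 x + q2 x) \<in> SLin"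
proof -
  assume "q1 \<in> SLin" "q2 \<in> SLin"
  then obtain c1 ps1 c2 ps2 where
    "set (map fst ps1) \<subseteq> Pairs" "q1 = (\<lambda>x. c1 + sum_list (map (\<lambda>(p,a). a * nu p x) ps1))"
    "set (map fst ps2) \<subseteq> Pairs" "q2 = (\<lambda>x. c2 + sum_list (map (\<lambda>(p,a). a * nu p x) ps2))"
    unfolding SLin_def by blast
  then show ?thesis unfolding SLin_def
    by (intro CollectI exI[of _ "c1 + c2"] exI[of _ "ps1 @ ps2"]) auto
qed

lemma sum_list_cmult: "sum_list (map (\<lambda>(p,b). (a::real) * b * f p) ps) = a * sum_list (map (\<lambda>(p,b). b * f p) ps)"
  by (induction ps) (auto simp: algebra_simps)

lemma SLin_scale: "q \<in> SLin \<Longrightarrow> (\<lambda>x. a * q x) \<in> SLin"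
proof -
  assume "q \<in> SLin"
  then obtain c ps where
    "set (map fst ps) \<subseteq> Pairs" "q = (\<lambda>x. c + sum_list (map (\<lambda>(p,a). a * nu p x) ps))"
    unfolding SLin_def by blast
  moreover have "sum_list (map (\<lambda>(p,b). b * nu p x) (map (\<lambda>(p,b). (p, a * b)) ps)) =
      a * sum_list (map (\<lambda>(p,b). b * nu p x) ps)" for x
    by (induction ps) (auto simp: algebra_simps)
  ultimately show ?thesis unfolding SLin_def
    by (intro CollectI exI[of _ "a * c"] exI[of _ "map (\<lambda>(p,b). (p, a * b)) ps"])
       (auto simp: algebra_simps)
qed

lemma SLin_nu: "p \<in> Pairs \<Longrightarrow> (\<lambda>x. a * nu p x) \<in> SLin"
  unfolding SLin_def
  by (intro CollectI exI[of _ 0] exI[of _ "[(p,a)]"]) auto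

lemma App_SLin: "q \<in> SLin \<Longrightarrow> q \<in> App"
  unfolding App_def by force

lemma App_add: "h1 \<in> App \<Longrightarrow> h2 \<in> App \<Longrightarrow> (\<lambda>x. h1 x + h2 x) \<in> App"
proof -
  assume h: "h1 \<in> App" "h2 \<in> App"
  show ?thesis unfolding App_def
  proof (intro CollectI allI impI)
    fix e :: real assume e: "e > 0"
    have e2: "e/2 > 0" using e by simp
    obtain q1 where q1: "q1 \<in> SLin" "\<forall>x\<in>X. \<bar>h1 x - q1 x\<bar> < e/2" using h(1) e2 unfolding App_def by blast
    obtain q2 where q2: "q2 \<in> SLin" "\<forall>x\<in>X. \<bar>h2 x - q2 x\<bar> < e/2" using h(2) e2 unfolding App_def by blast
    show "\<exists>q\<in>SLin. \<forall>x\<in>X. \<bar>h1 x + h2 x - q x\<bar> < e"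
    proof (intro bexI[OF _ SLin_add[OF q1(1) q2(1)]] ballI)
      fix x assume "x \<in> X"
      then have "\<bar>h1 x - q1 x\<bar> < e/2" "\<bar>h2 x - q2 x\<bar> < e/2" using q1 q2 by auto
      then show "\<bar>h1 x + h2 x - (q1 x + q2 x)\<bar> < e" by arith
    qed
  qed
qed

lemma App_scale: "h \<in> App \<Longrightarrow> (\<lambda>x. a * h x) \<in> App"
proof (cases "a = 0")
  case True then show ?thesis using App_SLin SLin_const by simp
next
  case False
  assume h: "h \<in> App"
  show ?thesis unfolding App_def
  proof (intro CollectI allI impI)
    fix e :: real assume e: "e > 0"
    then have "e / \<bar>a\<bar> > 0" using False by simp
    then obtain q where q: "q \<in> SLin" "\<forall>x\<in>X. \<bar>h x - q x\<bar> < e / \<bar>a\<bar>" using h unfolding App_def by blast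
    have "\<bar>a * h x - a * q x\<bar> < e" if "x \<in> X" for x
    proof -
      have "\<bar>a * h x - a * q x\<bar> = \<bar>a\<bar> * \<bar>h x - q x\<bar>" by (simp add: abs_mult[symmetric] algebra_simps)
      also have "\<dots> < \<bar>a\<bar> * (e / \<bar>a\<bar>)" using q(2) that False by (intro mult_strict_left_mono) auto
      finally show ?thesis using False by simp
    qed
    then show "\<exists>q\<in>SLin. \<forall>x\<in>X. \<bar>a * h x - q x\<bar> < e"
      by (intro bexI[OF _ SLin_scale[OF q(1)]]) auto
  qed
qed

lemma App_approx:
  assumes "\<And>e. e > 0 \<Longrightarrow> \<exists>h\<in>App. \<forall>x\<in>X. \<bar>g x - h x\<bar> < e"
  shows "g \<in> App"
  unfolding App_def
proof (intro CollectI allI impI)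
  fix e :: real assume e: "e > 0"
  obtain h where h: "h \<in> App" "\<forall>x\<in>X. \<bar>g x - h x\<bar> < e/2" using assms[of "e/2"] e by auto
  have e2: "e/2 > 0" using e by simp
  obtain q where q: "q \<in> SLin" "\<forall>x\<in>X. \<bar>h x - q x\<bar> < e/2" using h(1) e2 unfolding App_def by blast
  show "\<exists>q\<in>SLin. \<forall>x\<in>X. \<bar>g x - q x\<bar> < e"
  proof (intro bexI[OF _ q(1)] ballI)
    fix x assume "x \<in> X"
    then have "\<bar>g x - h x\<bar> < e/2" "\<bar>h x - q x\<bar> < e/2" using h q by auto
    then show "\<bar>g x - q x\<bar> < e" by arith
  qed
qed

end




context samp
begin

lemma relu_ridge_SLin:
  assumes "x1 \<in> X" "l > 0" "x1 + l *\<^sub>R v \<in> X" "v \<noteq> 0"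
  shows "(\<lambda>x. a * relu (B v x - B v x1)) \<in> SLin"
proof -
  define p where "p = (x1, x1 + l *\<^sub>R v)"
  have Bvv: "B v v > 0" using B_pos assms(4) by simp
  have Bll: "B (l *\<^sub>R v) (l *\<^sub>R v) = l * l * B v v" using B_scale1 B_scale2 by simp
  have pP: "p \<in> Pairs" unfolding Pairs_def p_def using assms Bvv Bll by auto
  have "nu p x = relu (B v x - B v x1) / (l * B v v)" for x
  proof -
    have "B (l *\<^sub>R v) (x - x1) = l * (B v x - B v x1)" by (simp add: B_scale1 B_diff2 right_diff_distrib)
    then have "nu p x = relu (l * (B v x - B v x1)) / (l * l * B v v)"
      unfolding nu_def p_def using Bll by simp
    also have "\<dots> = relu (B v x - B v x1) / (l * B v v)"
      using relu_scale[OF assms(2)] assms(2) by simp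
    finally show ?thesis .
  qed
  then have "(\<lambda>x. (a * (l * B v v)) * nu p x) = (\<lambda>x. a * relu (B v x - B v x1))"
    using Bvv assms(2) by auto
  then show ?thesis using SLin_nu[OF pP, of "a * (l * B v v)"] by simp
qed

lemma exp_ridge_App: "(\<lambda>x. exp (B v x)) \<in> App"
proof (cases "v = 0")
  case True
  then show ?thesis using App_SLin[OF SLin_const[of 1]] B_zero1 by simp
next
  case False
  define K where "K = B v ` X"
  define T where "T = {B v x1 | x1. x1 \<in> X \<and> (\<exists>l>0. x1 + l *\<^sub>R v \<in> X)}"
  have K: "compact K" unfolding K_def
    by (rule compact_continuous_image[OF continuous_on_subset[OF B_cont] X_compact]) simp
  have TK: "T \<subseteq> K" unfolding T_def K_def by auto
  have KT: "K \<subseteq> closure T"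
  proof
    fix t assume "t \<in> K"
    then obtain x0 where x0: "x0 \<in> X" "t = B v x0" unfolding K_def by auto
    show "t \<in> closure T" unfolding closure_approachable
    proof (intro allI impI)
      fix \<eta> :: real assume "\<eta> > 0"
      then obtain x1 l where "x1 \<in> X" "l > 0" "x1 + l *\<^sub>R v \<in> X" "\<bar>B v x1 - B v x0\<bar> < \<eta>"
        using dense[OF False x0(1)] by blast
      then show "\<exists>s\<in>T. dist s t < \<eta>" unfolding T_def using x0 by (auto simp: dist_real_def)
    qed
  qed
  show ?thesis
  proof (rule App_approx)
    fix e :: real assume e: "e > 0"
    obtain c ps where cps: "set (map snd ps) \<subseteq> T" "\<forall>t\<in>K. \<bar>exp t - PL c ps t\<bar> < e"
      using pl_approx[OF K TK KT continuous_on_exp[OF continuous_on_id] e] by blast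
    have "set (map snd ps) \<subseteq> T \<Longrightarrow> (\<lambda>x. PL c ps (B v x)) \<in> SLin" for ps
    proof (induction ps)
      case Nil then show ?case by (simp add: PL_def SLin_const)
    next
      case (Cons q ps)
      obtain a s where q: "q = (a, s)" by force
      then have "s \<in> T" using Cons.prems by auto
      then obtain x1 l where "x1 \<in> X" "l > 0" "x1 + l *\<^sub>R v \<in> X" "s = B v x1" unfolding T_def by auto
      then have "(\<lambda>x. a * relu (B v x - s)) \<in> SLin" using relu_ridge_SLin False by simp
      moreover have "(\<lambda>x. PL c ps (B v x)) \<in> SLin" using Cons by auto
      ultimately have "(\<lambda>x. a * relu (B v x - s) + PL c ps (B v x)) \<in> SLin" by (rule SLin_add)
      moreover have "PL c (q # ps) t = a * relu (t - s) + PL c ps t" for t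
        unfolding q PL_def by simp
      ultimately show ?case by simp
    qed
    then have "(\<lambda>x. PL c ps (B v x)) \<in> App" using cps(1) App_SLin by blast
    moreover have "\<forall>x\<in>X. \<bar>exp (B v x) - PL c ps (B v x)\<bar> < e" using cps(2) unfolding K_def by auto
    ultimately show "\<exists>h\<in>App. \<forall>x\<in>X. \<bar>exp (B v x) - h x\<bar> < e"
      by (intro bexI[where x="\<lambda>x. PL c ps (B v x)"]) auto
  qed
qed

inductive_set ES :: "('a \<Rightarrow> real) set" where
  ES_exp: "(\<lambda>x. c * exp (B v x)) \<in> ES"
| ES_add: "f \<in> ES \<Longrightarrow> g \<in> ES \<Longrightarrow> (\<lambda>x. f x + g x) \<in> ES"

lemma ES_mult1: "f \<in> ES \<Longrightarrow> (\<lambda>x. c * exp (B v x) * f x) \<in> ES"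
proof (induction rule: ES.induct)
  case (ES_exp c' v')
  have "(\<lambda>x. (c * c') * exp (B (v + v') x)) \<in> ES" by (rule ES.ES_exp)
  moreover have "(\<lambda>x. (c * c') * exp (B (v + v') x)) = (\<lambda>x. c * exp (B v x) * (c' * exp (B v' x)))"
    by (auto simp: B_add1 exp_add)
  ultimately show ?case by simp
next
  case (ES_add f g)
  have "(\<lambda>x. c * exp (B v x) * f x + c * exp (B v x) * g x) \<in> ES" by (rule ES.ES_add[OF ES_add.IH])
  then show ?case by (simp add: algebra_simps)
qed

lemma ES_mult: "f \<in> ES \<Longrightarrow> g \<in> ES \<Longrightarrow> (\<lambda>x. f x * g x) \<in> ES"
proof (induction rule: ES.induct)
  case (ES_exp c v) then show ?case using ES_mult1 by simp
next
  case (ES_add f1 f2)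
  then have "(\<lambda>x. f1 x * g x + f2 x * g x) \<in> ES" by (intro ES.ES_add) auto
  then show ?case by (simp add: algebra_simps)
qed

lemma ES_const: "(\<lambda>x. c) \<in> ES"
  using ES_exp[of c 0] by (simp add: B_zero1)

lemma ES_cont: "f \<in> ES \<Longrightarrow> continuous_on X f"
proof (induction rule: ES.induct)
  case (ES_exp c v)
  have "continuous_on X (B v)" using continuous_on_subset[OF B_cont] by blast
  then show ?case by (intro continuous_intros)
next
  case (ES_add f g) then show ?case by (intro continuous_intros)
qed

lemma ES_App: "f \<in> ES \<Longrightarrow> f \<in> App"
proof (induction rule: ES.induct)
  case (ES_exp c v) then show ?case using App_scale[OF exp_ridge_App] by simp
next
  case (ES_add f g) then show ?case using App_add by blast
qed

lemma cont_App: "continuous_on X f \<Longrightarrow> f \<in> App"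
proof (rule App_approx)
  fix e :: real assume f: "continuous_on X f" and e: "e > 0"
  have "\<exists>g. g \<in> ES \<and> (\<forall>x\<in>X. \<bar>f x - g x\<bar> < e)"
  proof (rule Stone_Weierstrass_HOL[OF X_compact])
    show "\<And>c. (\<lambda>x. c) \<in> ES" by (rule ES_const)
    show "\<And>f. f \<in> ES \<Longrightarrow> continuous_on X f" by (rule ES_cont)
    show "\<And>f g. f \<in> ES \<and> g \<in> ES \<Longrightarrow> (\<lambda>x. f x + g x) \<in> ES" by (auto intro: ES_add)
    show "\<And>f g. f \<in> ES \<and> g \<in> ES \<Longrightarrow> (\<lambda>x. f x * g x) \<in> ES" by (auto intro: ES_mult)
    show "\<exists>f. f \<in> ES \<and> f x \<noteq> f y" if "x \<in> X \<and> y \<in> X \<and> x \<noteq> y" for x y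
    proof -
      have "B (x - y) x - B (x - y) y > 0" using B_diff2[of "x-y" x y] B_pos[of "x-y"] that by simp
      then have "exp (B (x - y) x) \<noteq> exp (B (x - y) y)" by auto
      then show ?thesis using ES_exp[of 1 "x - y"] by auto
    qed
  qed (use f e in auto)
  then show "\<exists>h\<in>App. \<forall>x\<in>X. \<bar>f x - h x\<bar> < e" using ES_App by blast
qed

end




context samp
begin

definition VLin :: "('a \<Rightarrow> 'b::euclidean_space) set" where
  "VLin = {Q. \<exists>c ps. set (map fst ps) \<subseteq> Pairs \<and> Q = (\<lambda>x. c + sum_list (map (\<lambda>(p,a). nu p x *\<^sub>R a) ps))}"

lemma VLin_const: "(\<lambda>x. c) \<in> VLin"
  unfolding VLin_def by (rule CollectI, rule exI[of _ c], rule exI[of _ "[]"]) auto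

lemma VLin_add: "Q1 \<in> VLin \<Longrightarrow> Q2 \<in> VLin \<Longrightarrow> (\<lambda>x. Q1 x + Q2 x) \<in> VLin"
proof -
  assume "Q1 \<in> VLin" "Q2 \<in> VLin"
  then obtain c1 ps1 c2 ps2 where
    "set (map fst ps1) \<subseteq> Pairs" "Q1 = (\<lambda>x. c1 + sum_list (map (\<lambda>(p,a). nu p x *\<^sub>R a) ps1))"
    "set (map fst ps2) \<subseteq> Pairs" "Q2 = (\<lambda>x. c2 + sum_list (map (\<lambda>(p,a). nu p x *\<^sub>R a) ps2))"
    unfolding VLin_def by blast
  then show ?thesis unfolding VLin_def
    by (intro CollectI exI[of _ "c1 + c2"] exI[of _ "ps1 @ ps2"]) (auto simp: algebra_simps)
qed

lemma VLin_sum: "finite S \<Longrightarrow> (\<And>i. i \<in> S \<Longrightarrow> Q i \<in> VLin) \<Longrightarrow> (\<lambda>x. \<Sum>i\<in>S. Q i x) \<in> VLin"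
proof (induction S rule: finite_induct)
  case empty then show ?case using VLin_const[of 0] by simp
next
  case (insert i S)
  then have "(\<lambda>x. Q i x + (\<Sum>i\<in>S. Q i x)) \<in> VLin" by (intro VLin_add) auto
  then show ?case using insert by simp
qed

lemma SLin_VLin: "q \<in> SLin \<Longrightarrow> (\<lambda>x. q x *\<^sub>R (b::'b::euclidean_space)) \<in> VLin"
proof -
  assume "q \<in> SLin"
  then obtain c ps where
    "set (map fst ps) \<subseteq> Pairs" "q = (\<lambda>x. c + sum_list (map (\<lambda>(p,a). a * nu p x) ps))"
    unfolding SLin_def by blast
  moreover have "sum_list (map (\<lambda>(p,a). nu p x *\<^sub>R a) (map (\<lambda>(p,a). (p, a *\<^sub>R b)) ps)) =
      sum_list (map (\<lambda>(p,a). a * nu p x) ps) *\<^sub>R b" for x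
    by (induction ps) (auto simp: algebra_simps)
  ultimately show ?thesis unfolding VLin_def
    by (intro CollectI exI[of _ "c *\<^sub>R b"] exI[of _ "map (\<lambda>(p,a). (p, a *\<^sub>R b)) ps"])
       (auto simp: algebra_simps)
qed

lemma vec_approx:
  fixes f :: "'a \<Rightarrow> 'b::euclidean_space"
  assumes f: "continuous_on X f" and e: "e > 0"
  shows "\<exists>c ps. set (map fst ps) \<subseteq> Pairs \<and>
           (\<forall>x\<in>X. norm (f x - (c + sum_list (map (\<lambda>(p,a). nu p x *\<^sub>R a) ps))) < e)"
proof -
  define e' where "e' = e / real DIM('b)"
  have e': "e' > 0" using e unfolding e'_def by simp
  have "\<forall>b\<in>Basis. \<exists>q\<in>SLin. \<forall>x\<in>X. \<bar>f x \<bullet> b - q x\<bar> < e'"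
  proof
    fix b :: 'b assume "b \<in> Basis"
    have "continuous_on X (\<lambda>x. f x \<bullet> b)" using f by (intro continuous_intros)
    then have "(\<lambda>x. f x \<bullet> b) \<in> App" by (rule cont_App)
    then show "\<exists>q\<in>SLin. \<forall>x\<in>X. \<bar>f x \<bullet> b - q x\<bar> < e'" using e' unfolding App_def by blast
  qed
  then obtain q where q: "\<And>b. b \<in> Basis \<Longrightarrow> q b \<in> SLin"
    "\<And>b x. b \<in> Basis \<Longrightarrow> x \<in> X \<Longrightarrow> \<bar>f x \<bullet> b - q b x\<bar> < e'"
    by metis
  define Q where "Q = (\<lambda>x. \<Sum>b\<in>Basis. q b x *\<^sub>R b)"
  have "Q \<in> VLin" unfolding Q_def by (rule VLin_sum) (auto intro: SLin_VLin q(1))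
  then obtain c ps where cps: "set (map fst ps) \<subseteq> Pairs" "Q = (\<lambda>x. c + sum_list (map (\<lambda>(p,a). nu p x *\<^sub>R a) ps))"
    unfolding VLin_def by blast
  have "norm (f x - Q x) < e" if x: "x \<in> X" for x
  proof -
    have "f x - Q x = (\<Sum>b\<in>Basis. (f x \<bullet> b - q b x) *\<^sub>R b)"
      unfolding Q_def by (simp add: scaleR_diff_left sum_subtractf euclidean_representation)
    then have "norm (f x - Q x) \<le> (\<Sum>b\<in>Basis. norm ((f x \<bullet> b - q b x) *\<^sub>R b))"
      by (metis norm_sum)
    also have "\<dots> = (\<Sum>b\<in>Basis. \<bar>f x \<bullet> b - q b x\<bar>)" by simp
    also have "\<dots> < (\<Sum>b\<in>(Basis::'b set). e')"
      by (rule sum_strict_mono) (use q(2) x in auto)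
    also have "\<dots> = e" unfolding e'_def by simp
    finally show ?thesis .
  qed
  then show ?thesis using cps by auto
qed

end




lemma vinner_diff: "vinner n u y - vinner n u y1 = vinner n u (\<lambda>k. y k - y1 k)"
  unfolding vinner_def by (simp add: sum_subtractf right_diff_distrib)

lemma vinner_div: "vinner n (\<lambda>k. u k / c) y = vinner n u y / c"
  unfolding vinner_def by (simp add: sum_divide_distrib)

lemma vinner_sq_nonneg: "vinner n u u \<ge> 0"
  unfolding vinner_def by (intro sum_nonneg) simp

lemma vnorm_sq: "(vnorm n u)\<^sup>2 = vinner n u u"
  unfolding vnorm_def using vinner_sq_nonneg by simp

lemma vinner_cong: "(\<And>k. k < n \<Longrightarrow> u k = u' k) \<Longrightarrow> (\<And>k. k < n \<Longrightarrow> v k = v' k) \<Longrightarrow> vinner n u v = vinner n u' v'"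
  unfolding vinner_def by (intro sum.cong) auto

lemma relu_div: "c \<ge> 0 \<Longrightarrow> relu (a / c) = relu a / c"
  by (cases "c = 0") (auto simp: relu_def max_def divide_le_0_iff)

lemma neuron_eq:
  "relu (vinner n (\<lambda>k. (y2 k - y1 k) / (vnorm n (\<lambda>k. y2 k - y1 k))\<^sup>2) y
         - vinner n (\<lambda>k. (y2 k - y1 k) / (vnorm n (\<lambda>k. y2 k - y1 k))\<^sup>2) y1)
   = relu (vinner n (\<lambda>k. y2 k - y1 k) (\<lambda>k. y k - y1 k)) / vinner n (\<lambda>k. y2 k - y1 k) (\<lambda>k. y2 k - y1 k)"
  unfolding vnorm_sq vinner_div
  by (simp only: diff_divide_distrib[symmetric] vinner_diff relu_div[OF vinner_sq_nonneg])

lemma vinner_pos_ne: "vinner n (\<lambda>k. y2 k - y1 k) (\<lambda>k. y2 k - y1 k) > 0 \<Longrightarrow> y2 \<noteq> y1"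
  unfolding vinner_def by auto

lemma basis_enum_props: "distinct (basis_enum :: 'a::euclidean_space list) \<and> set (basis_enum :: 'a list) = Basis"
proof -
  have "\<exists>bs. distinct bs \<and> set bs = (Basis :: 'a set)" using finite_distinct_list[OF finite_Basis] by metis
  then show ?thesis unfolding basis_enum_def by (rule someI_ex)
qed

lemma basis_enum_length: "length (basis_enum :: 'a::euclidean_space list) = DIM('a)"
  using basis_enum_props distinct_card by metis

lemma basis_enum_in: "j < DIM('a) \<Longrightarrow> (basis_enum :: 'a::euclidean_space list) ! j \<in> Basis"
  using basis_enum_props basis_enum_length nth_mem by metis

lemma basis_enum_inner: "i < DIM('a) \<Longrightarrow> j < DIM('a) \<Longrightarrow>
  (basis_enum :: 'a::euclidean_space list) ! i \<bullet> basis_enum ! j = (if i = j then 1 else 0)"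
proof -
  assume ij: "i < DIM('a)" "j < DIM('a)"
  have "(basis_enum :: 'a list) ! i = basis_enum ! j \<longleftrightarrow> i = j"
    using basis_enum_props basis_enum_length ij nth_eq_iff_index_eq by metis
  then show ?thesis using basis_enum_in[OF ij(1)] basis_enum_in[OF ij(2)] by (auto simp: inner_Basis)
qed

lemma basis_enum_nonzero: "(u::'a::euclidean_space) \<noteq> 0 \<Longrightarrow> \<exists>j<DIM('a). u \<bullet> basis_enum ! j \<noteq> 0"
proof -
  assume "u \<noteq> 0"
  then obtain b where b: "b \<in> Basis" "u \<bullet> b \<noteq> 0" using euclidean_all_zero_iff by blast
  then obtain j where "j < length (basis_enum :: 'a list)" "basis_enum ! j = b"
    using basis_enum_props in_set_conv_nth by metis
  then show ?thesis using b basis_enum_length by metis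
qed




definition Baff :: "nat \<Rightarrow> (nat \<Rightarrow> nat) \<Rightarrow> real \<Rightarrow> 'a::euclidean_space \<Rightarrow> 'a \<Rightarrow> real" where
  "Baff n \<rho> s u w = vinner n (\<lambda>k. u \<bullet> basis_enum ! (\<rho> k) / s) (\<lambda>k. w \<bullet> basis_enum ! (\<rho> k) / s)"

lemma aff_diff:
  assumes "\<And>x k. k < n \<Longrightarrow> y x k = (x \<bullet> basis_enum ! (\<rho> k) - off (\<rho> k)) / s"
  shows "vinner n (\<lambda>k. y x2 k - y x1 k) (\<lambda>k. y x k - y x1 k) = Baff n \<rho> s (x2 - x1) (x - x1)"
  unfolding Baff_def by (rule vinner_cong) (simp_all add: assms inner_diff_left diff_divide_distrib)

lemma Baff_add1: "Baff n \<rho> s (u + v) w = Baff n \<rho> s u w + Baff n \<rho> s v w"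
  unfolding Baff_def vinner_def by (simp add: inner_add_left add_divide_distrib distrib_right sum.distrib)

lemma Baff_scale1: "Baff n \<rho> s (c *\<^sub>R u) w = c * Baff n \<rho> s u w"
  unfolding Baff_def vinner_def by (simp add: sum_distrib_left algebra_simps)

lemma Baff_diff2: "Baff n \<rho> s u (w - w') = Baff n \<rho> s u w - Baff n \<rho> s u w'"
  unfolding Baff_def vinner_def by (simp add: inner_diff_left diff_divide_distrib right_diff_distrib sum_subtractf)

lemma Baff_scale2: "Baff n \<rho> s u (c *\<^sub>R w) = c * Baff n \<rho> s u w"
  unfolding Baff_def vinner_def by (simp add: sum_distrib_left algebra_simps)

lemma Baff_cont: "continuous_on UNIV (Baff n \<rho> s u)"
  unfolding Baff_def vinner_def divide_inverse by (intro continuous_intros)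

lemma Baff_pos:
  assumes "DIM('a) \<le> n" "\<And>j. j < DIM('a) \<Longrightarrow> \<rho> j = j" "s \<noteq> 0" "(u::'a::euclidean_space) \<noteq> 0"
  shows "Baff n \<rho> s u u > 0"
proof -
  obtain j where j: "j < DIM('a)" "u \<bullet> basis_enum ! j \<noteq> 0" using basis_enum_nonzero[OF assms(4)] by blast
  have "u \<bullet> basis_enum ! (\<rho> j) / s \<noteq> 0" using j assms(2,3) by simp
  then have "0 < (u \<bullet> basis_enum ! (\<rho> j) / s) * (u \<bullet> basis_enum ! (\<rho> j) / s)"
    by (metis not_real_square_gt_zero)
  also have "\<dots> \<le> (\<Sum>k<n. (u \<bullet> basis_enum ! (\<rho> k) / s) * (u \<bullet> basis_enum ! (\<rho> k) / s))"
    by (rule member_le_sum[where f="\<lambda>k. (u \<bullet> basis_enum ! (\<rho> k) / s) * (u \<bullet> basis_enum ! (\<rho> k) / s)"])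
       (use j assms(1) in auto)
  finally show ?thesis unfolding Baff_def vinner_def .
qed

lemma Baff_basis:
  assumes "i < DIM('a)" "\<And>k. k < n \<Longrightarrow> \<rho> k < DIM('a)"
  shows "Baff n \<rho> s (c *\<^sub>R (basis_enum ! i :: 'a::euclidean_space)) w
     = (\<Sum>k<n. if \<rho> k = i then 1 else 0) * (c * (w \<bullet> basis_enum ! i) / (s * s))"
  unfolding Baff_def vinner_def sum_distrib_right
proof (rule sum.cong[OF refl])
  fix k assume "k \<in> {..<n}"
  then have "\<rho> k < DIM('a)" using assms by auto
  then show "c *\<^sub>R (basis_enum ! i :: 'a) \<bullet> basis_enum ! \<rho> k / s * (w \<bullet> basis_enum ! \<rho> k / s) =
        (if \<rho> k = i then 1 else 0) * (c * (w \<bullet> basis_enum ! i) / (s * s))"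
  proof -
    have "(basis_enum ! i :: 'a) \<bullet> basis_enum ! \<rho> k = (if \<rho> k = i then 1 else (0::real))"
      using basis_enum_inner[OF assms(1) \<open>\<rho> k < DIM('a)\<close>] by auto
    then show ?thesis by (cases "\<rho> k = i") auto
  qed
qed

lemma hidden_neuron:
  assumes "i < DIM('a)" "\<And>k. k < n \<Longrightarrow> \<rho> k < DIM('a)" "i < n" "\<rho> i = i" "s \<noteq> 0" "eI > 0"
    and "(w :: 'a::euclidean_space) \<bullet> basis_enum ! i \<ge> 0"
  shows "relu (Baff n \<rho> s (eI *\<^sub>R (basis_enum ! i :: 'a)) w) / Baff n \<rho> s (eI *\<^sub>R (basis_enum ! i :: 'a)) (eI *\<^sub>R (basis_enum ! i :: 'a))
     = (w \<bullet> basis_enum ! i) / eI"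
    and "Baff n \<rho> s (eI *\<^sub>R (basis_enum ! i :: 'a)) (eI *\<^sub>R (basis_enum ! i :: 'a)) > 0"
proof -
  define C where "C = (\<Sum>k<n. if \<rho> k = i then 1 else (0::real))"
  have "(if \<rho> i = i then 1 else (0::real)) \<le> C" unfolding C_def
    by (rule member_le_sum[where f="\<lambda>k. if \<rho> k = i then 1 else (0::real)"]) (use assms in auto)
  then have C: "C \<ge> 1" using assms by simp
  have bi: "basis_enum ! i \<bullet> (basis_enum ! i :: 'a) = 1" using basis_enum_inner[OF assms(1) assms(1)] by simp
  have e1: "Baff n \<rho> s (eI *\<^sub>R (basis_enum ! i :: 'a)) w = C * (eI * (w \<bullet> basis_enum ! i) / (s * s))"
    unfolding C_def by (rule Baff_basis[OF assms(1,2)])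
  have e2: "Baff n \<rho> s (eI *\<^sub>R (basis_enum ! i :: 'a)) (eI *\<^sub>R (basis_enum ! i :: 'a)) = C * (eI * eI / (s * s))"
    unfolding C_def using Baff_basis[where n=n and \<rho>=\<rho> and c=eI and w="eI *\<^sub>R basis_enum ! i" and s=s, OF assms(1,2)] bi by simp
  show "Baff n \<rho> s (eI *\<^sub>R (basis_enum ! i :: 'a)) (eI *\<^sub>R (basis_enum ! i :: 'a)) > 0"
  proof -
    have "s * s > 0" using assms(5) by (metis not_real_square_gt_zero)
    then have "eI * eI / (s * s) > 0" using assms(6) by (metis divide_pos_pos mult_pos_pos)
    then show ?thesis unfolding e2 using C by (simp only: mult_pos_pos)
  qed
  have "relu (C * (eI * (w \<bullet> basis_enum ! i) / (s * s))) = C * (eI * (w \<bullet> basis_enum ! i) / (s * s))"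
    using C assms(6,7) by (intro relu_pos) simp
  then show "relu (Baff n \<rho> s (eI *\<^sub>R (basis_enum ! i :: 'a)) w) / Baff n \<rho> s (eI *\<^sub>R (basis_enum ! i :: 'a)) (eI *\<^sub>R (basis_enum ! i :: 'a))
     = (w \<bullet> basis_enum ! i) / eI"
    unfolding e1 e2 using C assms(5,6) by (simp add: field_simps)
qed




theorem theorem5:
  fixes X' :: "'a::euclidean_space set" and eI :: real and L :: nat and N :: "nat \<Rightarrow> nat"
    and f :: "'a \<Rightarrow> 'b::euclidean_space" and e :: real
  assumes "compact X'" and "X' \<noteq> {}" and "reach X' > 0"
    and "0 < eI" and "ereal eI < reach X'" and "eI < 1"
    and "L \<ge> 1" and "\<forall>l\<in>{1..L-1}. N l \<ge> DIM('a)"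
    and "continuous_on {x. infdist x X' \<le> eI} f" and "e > 0"
  shows "\<exists>NL>0. \<exists>W b c b0.
           is_sampled {x. infdist x X' \<le> eI} L (N(0 := DIM('a), L := NL)) W b \<and>
           (\<forall>x\<in>{x. infdist x X' \<le> eI}.
              norm (net_out (N(0 := DIM('a), L := NL)) W b L c b0 x - f x) < e)"
proof -
  note X'c = assms(1) and X'ne = assms(2) and eI = assms(4) and L1 = assms(7) and NL1 = assms(8)
    and fc = assms(9) and e = assms(10)
  define X where "X = {x. infdist x X' \<le> eI}"
  have Xc: "compact X" unfolding X_def using compact_infdist_le[OF X'ne X'c eI] .
  have X'cl: "closed X'" using X'c compact_imp_closed by blast
  have near: "\<exists>x'\<in>X'. norm (x - x') \<le> eI" if "x \<in> X" for x
  proof -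
    obtain x' where "x' \<in> X'" "infdist x X' = dist x x'" using infdist_attains_inf[OF X'cl X'ne] by metis
    then show ?thesis using that unfolding X_def by (auto simp: dist_norm)
  qed
  have inX: "x \<in> X" if "x' \<in> X'" "norm (x - x') \<le> eI" for x x'
    unfolding X_def using infdist_le2[OF that(1), of x eI] that(2) by (simp add: dist_norm)
  have bbB: "(basis_enum ! i :: 'a) \<in> Basis" if "i < DIM('a)" for i using basis_enum_in that by blast
  have bbn: "norm (basis_enum ! i :: 'a) = 1" if "i < DIM('a)" for i using bbB[OF that] by simp
  have "\<forall>i. \<exists>zi. i < DIM('a) \<longrightarrow> zi \<in> X' \<and> (\<forall>y\<in>X'. zi \<bullet> (basis_enum ! i :: 'a) \<le> y \<bullet> basis_enum ! i)"
  proof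
    fix i
    have "continuous_on X' (\<lambda>y. y \<bullet> (basis_enum ! i :: 'a))" by (intro continuous_intros)
    then show "\<exists>zi. i < DIM('a) \<longrightarrow> zi \<in> X' \<and> (\<forall>y\<in>X'. zi \<bullet> (basis_enum ! i :: 'a) \<le> y \<bullet> basis_enum ! i)"
      using continuous_attains_inf[OF X'c X'ne] by blast
  qed
  then obtain z where z: "\<And>i. i < DIM('a) \<Longrightarrow> z i \<in> X'"
    "\<And>i y. i < DIM('a) \<Longrightarrow> y \<in> X' \<Longrightarrow> z i \<bullet> (basis_enum ! i :: 'a) \<le> y \<bullet> basis_enum ! i"
    by metis
  define lo where "lo = (\<lambda>i. z i - eI *\<^sub>R (basis_enum ! i :: 'a))"
  have z_lo: "z i - lo i = eI *\<^sub>R basis_enum ! i" for i unfolding lo_def by simp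
  have zX: "z i \<in> X" if "i < DIM('a)" for i using inX[OF z(1)[OF that], of "z i"] eI by simp
  have loX: "lo i \<in> X" if "i < DIM('a)" for i
    using inX[OF z(1)[OF that], of "lo i"] eI bbn[OF that] unfolding lo_def by simp
  have lo_min: "(x - lo i) \<bullet> basis_enum ! i \<ge> 0" if iD: "i < DIM('a)" and xX: "x \<in> X" for i x
  proof -
    obtain x' where x': "x' \<in> X'" "norm (x - x') \<le> eI" using near[OF xX] by blast
    have "\<bar>(x - x') \<bullet> basis_enum ! i\<bar> \<le> norm (x - x')" using Basis_le_norm[OF bbB[OF iD]] by blast
    moreover have "(x' - z i) \<bullet> basis_enum ! i \<ge> 0" using z(2)[OF iD x'(1)] by (simp add: inner_diff_left)
    moreover have "(x - lo i) \<bullet> basis_enum ! i = (x - x') \<bullet> basis_enum ! i + (x' - z i) \<bullet> basis_enum ! i + eI"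
      unfolding lo_def using bbB[OF iD] by (simp add: inner_diff_left inner_add_left algebra_simps)
    ultimately show ?thesis using x'(2) by linarith
  qed
  define N0 where "N0 = N(0 := DIM('a))"
  define \<pi> where "\<pi> = (\<lambda>j::nat. if j < DIM('a) then j else 0)"
  define \<rho> where "\<rho> = (\<lambda>l::nat. if l = 0 then (\<lambda>j::nat. j) else \<pi>)"
  define off where "off = (\<lambda>l::nat. \<lambda>i. if l = 0 then 0 else lo i \<bullet> (basis_enum ! i :: 'a))"
  define sc where "sc = (\<lambda>l::nat. if l = 0 then 1 else eI)"
  define Yf where "Yf = (\<lambda>l (x::'a) k. if k < N0 l then (x \<bullet> basis_enum ! (\<rho> l k) - off l (\<rho> l k)) / sc l else 0)"
  have DIMpos: "0 < DIM('a)" by simp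
  have \<pi>D: "\<pi> j < DIM('a)" for j unfolding \<pi>_def using DIMpos by auto
  have N0D: "DIM('a) \<le> N0 l" if "l < L" for l
    using NL1 that unfolding N0_def by (cases "l = 0") auto
  have \<rho>D: "\<rho> l k < DIM('a)" if "k < N0 l" for l k
    using that \<pi>D unfolding \<rho>_def N0_def by (cases "l = 0") auto
  have \<rho>id: "\<rho> l j = j" if "j < DIM('a)" for l j
    using that unfolding \<rho>_def \<pi>_def by auto
  have sc0: "sc l \<noteq> 0" for l unfolding sc_def using eI by auto
  have Yf_aff: "\<And>x k. k < N0 l \<Longrightarrow> Yf l x k = (x \<bullet> basis_enum ! (\<rho> l k) - off l (\<rho> l k)) / sc l" for l
    unfolding Yf_def by simp
  have Yf0: "Yf 0 = coords"
    unfolding Yf_def coords_def N0_def \<rho>_def off_def sc_def by (intro ext) simp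
  define Bf where "Bf = (Baff (N0 (L-1)) (\<rho> (L-1)) (sc (L-1)) :: 'a \<Rightarrow> 'a \<Rightarrow> real)"
  have SA: "samp X Bf"
  proof (unfold_locales)
    show "compact X" by (rule Xc)
    show "\<And>u v w. Bf (u + v) w = Bf u w + Bf v w" unfolding Bf_def by (rule Baff_add1)
    show "\<And>c u w. Bf (c *\<^sub>R u) w = c * Bf u w" unfolding Bf_def by (rule Baff_scale1)
    show "\<And>u w w'. Bf u (w - w') = Bf u w - Bf u w'" unfolding Bf_def by (rule Baff_diff2)
    show "\<And>c u w. Bf u (c *\<^sub>R w) = c * Bf u w" unfolding Bf_def by (rule Baff_scale2)
    show "\<And>u. continuous_on UNIV (Bf u)" unfolding Bf_def by (rule Baff_cont)
    show "\<And>u. u \<noteq> 0 \<Longrightarrow> 0 < Bf u u" unfolding Bf_def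
      by (rule Baff_pos) (use N0D[of "L-1"] L1 \<rho>id sc0 in auto)
  next
    fix u x0 :: 'a and \<eta> :: real
    assume u: "u \<noteq> 0" and x0: "x0 \<in> X" and \<eta>: "\<eta> > 0"
    obtain x' where x': "x' \<in> X'" "norm (x0 - x') \<le> eI" using near[OF x0] by blast
    define C where "C = \<bar>Bf u (x' - x0)\<bar>"
    define \<tau> where "\<tau> = min (1/2) (\<eta> / (C + 1))"
    have C0: "C \<ge> 0" unfolding C_def by simp
    have \<tau>1: "0 < \<tau>" unfolding \<tau>_def using \<eta> C0 by auto
    have \<tau>2: "\<tau> \<le> 1/2" unfolding \<tau>_def by (rule min.cobounded1)
    have \<tau>3: "\<tau> \<le> \<eta> / (C + 1)" unfolding \<tau>_def by (rule min.cobounded2)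
    note \<tau> = \<tau>1 \<tau>2 \<tau>3
    define x1 where "x1 = x0 + \<tau> *\<^sub>R (x' - x0)"
    define l where "l = \<tau> * eI / norm u"
    have l: "l > 0" unfolding l_def using \<tau> eI u by simp
    have x1x': "x1 - x' = (1 - \<tau>) *\<^sub>R (x0 - x')" unfolding x1_def by (simp add: algebra_simps)
    have n1: "norm (x1 - x') \<le> (1 - \<tau>) * eI"
      unfolding x1x' using \<tau> x'(2) by (simp add: mult_left_mono)
    have x1X: "x1 \<in> X" using inX[OF x'(1) order_trans[OF n1]] \<tau> eI by (simp add: mult_left_le_one_le)
    have "norm (x1 + l *\<^sub>R u - x') \<le> norm (x1 - x') + norm (l *\<^sub>R u)"
      by (metis add_diff_eq diff_add_eq norm_triangle_ineq add.commute)
    also have "\<dots> \<le> (1 - \<tau>) * eI + \<tau> * eI" using n1 l u \<tau> eI unfolding l_def by simp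
    also have "\<dots> = eI" by (simp add: algebra_simps)
    finally have x2X: "x1 + l *\<^sub>R u \<in> X" using inX[OF x'(1)] by blast
    have "Bf u x1 - Bf u x0 = \<tau> * Bf u (x' - x0)"
      unfolding Bf_def x1_def by (metis Baff_diff2 Baff_scale2 add_diff_cancel_left')
    then have "\<bar>Bf u x1 - Bf u x0\<bar> = \<tau> * C" unfolding C_def using \<tau> by (simp add: abs_mult)
    also have "\<dots> \<le> \<eta> / (C + 1) * C" using mult_right_mono[OF \<tau>3 C0] .
    also have "\<dots> < \<eta>" using C0 \<eta> by (simp add: field_simps)
    finally show "\<exists>x1\<in>X. \<exists>l>0. x1 + l *\<^sub>R u \<in> X \<and> \<bar>Bf u x1 - Bf u x0\<bar> < \<eta>"
      using x1X x2X l by blast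
  qed
  have fX: "continuous_on X f" using fc unfolding X_def .
  obtain c ps where cps: "set (map fst ps) \<subseteq> samp.Pairs X Bf"
    "\<forall>x\<in>X. norm (f x - (c + sum_list (map (\<lambda>(p,a). samp.nu Bf p x *\<^sub>R a) ps))) < e"
    using samp.vec_approx[OF SA fX e] by blast
  have Aff: "vinner (N0 l) (\<lambda>k. Yf l x2 k - Yf l x1 k) (\<lambda>k. Yf l x3 k - Yf l x1 k)
        = Baff (N0 l) (\<rho> l) (sc l) (x2 - x1) (x3 - x1)" for l x1 x2 x3
    by (rule aff_diff[where off="off l"]) (rule Yf_aff)
  have hid: "relu (vinner (N0 l) (\<lambda>k. (Yf l (z i) k - Yf l (lo i) k) / (vnorm (N0 l) (\<lambda>k. Yf l (z i) k - Yf l (lo i) k))\<^sup>2) (Yf l x)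
        - vinner (N0 l) (\<lambda>k. (Yf l (z i) k - Yf l (lo i) k) / (vnorm (N0 l) (\<lambda>k. Yf l (z i) k - Yf l (lo i) k))\<^sup>2) (Yf l (lo i)))
      = ((x - lo i) \<bullet> basis_enum ! i) / eI"
    and hid_pos: "vinner (N0 l) (\<lambda>k. Yf l (z i) k - Yf l (lo i) k) (\<lambda>k. Yf l (z i) k - Yf l (lo i) k) > 0"
    if "l < L" "i < DIM('a)" "x \<in> X" for l i x
  proof -
    have A: "vinner (N0 l) (\<lambda>k. Yf l x2 k - Yf l x1 k) (\<lambda>k. Yf l x3 k - Yf l x1 k)
        = Baff (N0 l) (\<rho> l) (sc l) (x2 - x1) (x3 - x1)" for x1 x2 x3
      by (rule aff_diff[where off="off l"]) (rule Yf_aff)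
    have H: "relu (Baff (N0 l) (\<rho> l) (sc l) (eI *\<^sub>R (basis_enum ! i :: 'a)) (x - lo i)) /
          Baff (N0 l) (\<rho> l) (sc l) (eI *\<^sub>R (basis_enum ! i :: 'a)) (eI *\<^sub>R (basis_enum ! i :: 'a))
        = ((x - lo i) \<bullet> basis_enum ! i) / eI"
      "Baff (N0 l) (\<rho> l) (sc l) (eI *\<^sub>R (basis_enum ! i :: 'a)) (eI *\<^sub>R (basis_enum ! i :: 'a)) > 0"
      using hidden_neuron[of i "N0 l" "\<rho> l" "sc l" eI "x - lo i"] that \<rho>D \<rho>id sc0 eI N0D lo_min
      by (auto simp: less_le_trans)
    show "relu (vinner (N0 l) (\<lambda>k. (Yf l (z i) k - Yf l (lo i) k) / (vnorm (N0 l) (\<lambda>k. Yf l (z i) k - Yf l (lo i) k))\<^sup>2) (Yf l x)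
        - vinner (N0 l) (\<lambda>k. (Yf l (z i) k - Yf l (lo i) k) / (vnorm (N0 l) (\<lambda>k. Yf l (z i) k - Yf l (lo i) k))\<^sup>2) (Yf l (lo i)))
      = ((x - lo i) \<bullet> basis_enum ! i) / eI"
      unfolding neuron_eq A z_lo using H(1) .
    show "vinner (N0 l) (\<lambda>k. Yf l (z i) k - Yf l (lo i) k) (\<lambda>k. Yf l (z i) k - Yf l (lo i) k) > 0"
      unfolding A z_lo using H(2) .
  qed
  define p0 where "p0 = (lo 0, z 0)"
  have p0P: "p0 \<in> samp.Pairs X Bf"
  proof -
    have "L - 1 < L" using L1 by simp
    then have "Bf (z 0 - lo 0) (z 0 - lo 0) > 0"
      using hid_pos[of "L-1" 0 "z 0"] zX[OF DIMpos] DIMpos unfolding Bf_def Aff by simp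
    then show ?thesis unfolding samp.Pairs_def[OF SA] p0_def using loX[OF DIMpos] zX[OF DIMpos] z_lo by auto
  qed
  define ps' where "ps' = (p0, 0) # ps"
  define NL where "NL = length ps'"
  define N' where "N' = N0(L := NL)"
  define P where "P = (\<lambda>i. fst (ps' ! i))"
  define cv where "cv = (\<lambda>i. snd (ps' ! i))"
  define Wf where "Wf = (\<lambda>l x1 x2. (\<lambda>k. (Yf (l-1) x2 k - Yf (l-1) x1 k) / (vnorm (N0 (l-1)) (\<lambda>k. Yf (l-1) x2 k - Yf (l-1) x1 k))\<^sup>2))"
  define bf where "bf = (\<lambda>l x1 x2. vinner (N0 (l-1)) (Wf l x1 x2) (Yf (l-1) x1))"
  define W where "W = (\<lambda>l i. if l < L then Wf l (lo (\<pi> i)) (z (\<pi> i)) else Wf l (fst (P i)) (snd (P i)))"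
  define b where "b = (\<lambda>l i. if l < L then bf l (lo (\<pi> i)) (z (\<pi> i)) else bf l (fst (P i)) (snd (P i)))"
  have NLpos: "NL > 0" unfolding NL_def ps'_def by simp
  have N'l: "N' l = N0 l" if "l < L" for l using that unfolding N'_def by simp
  have N'L: "N' L = NL" unfolding N'_def by simp
  have PP: "P i \<in> samp.Pairs X Bf" if "i < NL" for i
  proof -
    have "ps' ! i \<in> set ps'" using that unfolding NL_def by simp
    then have "P i \<in> set (map fst ps')" unfolding P_def by simp
    then show ?thesis using cps(1) p0P unfolding ps'_def by auto
  qed
  have layers: "layer N' W b l x = Yf l x" if "l < L" "x \<in> X" for l x
    using that(1)
  proof (induction l)
    case 0 then show ?case by (simp add: Yf0)
  next
    case (Suc l)
    then have IH: "layer N' W b l x = Yf l x" and lL: "l < L" by auto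
    show ?case
    proof (rule ext)
      fix i
      show "layer N' W b (Suc l) x i = Yf (Suc l) x i"
      proof (cases "i < N0 (Suc l)")
        case True
        have "layer N' W b (Suc l) x i = relu (vinner (N0 l) (Wf (Suc l) (lo (\<pi> i)) (z (\<pi> i))) (Yf l x) - bf (Suc l) (lo (\<pi> i)) (z (\<pi> i)))"
          using True IH Suc.prems N'l[OF lL] N'l[OF Suc.prems] unfolding W_def b_def by simp
        also have "\<dots> = ((x - lo (\<pi> i)) \<bullet> basis_enum ! (\<pi> i)) / eI"
          unfolding Wf_def bf_def using hid(1)[OF lL \<pi>D that(2)] by simp
        also have "\<dots> = Yf (Suc l) x i"
          unfolding Yf_def \<rho>_def off_def sc_def using True by (simp add: inner_diff_left)
        finally show ?thesis .
      next
        case False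
        then show ?thesis using N'l[OF Suc.prems] unfolding Yf_def by simp
      qed
    qed
  qed
  obtain L0 where L0: "L = Suc L0" using L1 by (cases L) auto
  have L0L: "L0 < L" using L0 by simp
  have nuE: "samp.nu Bf p x = relu (Bf (snd p - fst p) (x - fst p)) / Bf (snd p - fst p) (snd p - fst p)" for p x
    by (rule samp.nu_def[OF SA])
  have last: "layer N' W b L x i = samp.nu Bf (P i) x" if x: "x \<in> X" and i: "i < NL" for x i
  proof -
    have WL: "W (Suc L0) i = Wf (Suc L0) (fst (P i)) (snd (P i))" "b (Suc L0) i = bf (Suc L0) (fst (P i)) (snd (P i))"
      unfolding W_def b_def L0 by simp_all
    have "layer N' W b L x i = relu (vinner (N' L0) (W (Suc L0) i) (layer N' W b L0 x) - b (Suc L0) i)"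
      unfolding L0 using i N'L[unfolded L0] by simp
    also have "\<dots> = relu (vinner (N0 L0) (Wf L (fst (P i)) (snd (P i))) (Yf L0 x) - bf L (fst (P i)) (snd (P i)))"
      unfolding WL N'l[OF L0L] layers[OF L0L x] L0 ..
    also have "\<dots> = samp.nu Bf (P i) x"
      unfolding nuE unfolding Wf_def bf_def L0 diff_Suc_1 neuron_eq Aff Bf_def ..
    finally show ?thesis .
  qed
  have sum_ps': "sum_list (map g ps') = (\<Sum>i<NL. g (ps' ! i))" for g :: "('a \<times> 'a) \<times> 'b \<Rightarrow> 'b"
    unfolding NL_def by (simp add: sum_list_sum_nth atLeast0LessThan)
  have net: "net_out N' W b L cv (-c) x = c + sum_list (map (\<lambda>(p,a). samp.nu Bf p x *\<^sub>R a) ps)" if x: "x \<in> X" for x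
  proof -
    have "net_out N' W b L cv (-c) x = (\<Sum>i<NL. samp.nu Bf (P i) x *\<^sub>R cv i) + c"
      unfolding net_out_def N'L using last[OF x] by simp
    also have "(\<Sum>i<NL. samp.nu Bf (P i) x *\<^sub>R cv i) = sum_list (map (\<lambda>(p,a). samp.nu Bf p x *\<^sub>R a) ps')"
      unfolding sum_ps' P_def cv_def by (simp add: split_beta)
    also have "\<dots> = sum_list (map (\<lambda>(p,a). samp.nu Bf p x *\<^sub>R a) ps)" unfolding ps'_def by simp
    finally show ?thesis by (simp add: add.commute)
  qed
  have approx: "\<forall>x\<in>X. norm (net_out N' W b L cv (-c) x - f x) < e"
    using cps(2) net by (simp add: norm_minus_commute)
  have samp_ok: "is_sampled X L N' W b"
    unfolding is_sampled_def
  proof (intro ballI allI impI)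
    fix l i assume l: "l \<in> {1..L}" and i: "i < N' l"
    have l1L: "l - 1 < L" using l by auto
    show "\<exists>x1\<in>X. \<exists>x2\<in>X. layer N' W b (l - 1) x1 \<noteq> layer N' W b (l - 1) x2 \<and>
        W l i = (\<lambda>j. (layer N' W b (l - 1) x2 j - layer N' W b (l - 1) x1 j) /
                   (vnorm (N' (l - 1)) (\<lambda>k. layer N' W b (l - 1) x2 k - layer N' W b (l - 1) x1 k))\<^sup>2) \<and>
        b l i = vinner (N' (l - 1)) (W l i) (layer N' W b (l - 1) x1)"
    proof (cases "l < L")
      case True
      have X12: "lo (\<pi> i) \<in> X" "z (\<pi> i) \<in> X" using loX[OF \<pi>D] zX[OF \<pi>D] by auto
      have "Yf (l-1) (z (\<pi> i)) \<noteq> Yf (l-1) (lo (\<pi> i))"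
        using vinner_pos_ne hid_pos[OF l1L \<pi>D X12(2)] by blast
      then show ?thesis using X12 layers[OF l1L] N'l[OF l1L] True
        by (intro bexI[of _ "lo (\<pi> i)"] bexI[of _ "z (\<pi> i)"]) (auto simp: W_def b_def Wf_def bf_def)
    next
      case False
      then have lL: "l = L" using l by auto
      have iNL: "i < NL" using i lL N'L by simp
      have PPi: "fst (P i) \<in> X" "snd (P i) \<in> X" "Bf (snd (P i) - fst (P i)) (snd (P i) - fst (P i)) > 0"
        using PP[OF iNL] unfolding samp.Pairs_def[OF SA] by auto
      have "Yf (l-1) (snd (P i)) \<noteq> Yf (l-1) (fst (P i))"
        using PPi(3) vinner_pos_ne unfolding Bf_def lL Aff[symmetric] by blast
      then show ?thesis using PPi layers[OF l1L] N'l[OF l1L] lL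
        by (intro bexI[of _ "fst (P i)"] bexI[of _ "snd (P i)"]) (auto simp: W_def b_def Wf_def bf_def)
    qed
  qed
  have N'eq: "N' = N(0 := DIM('a), L := NL)" unfolding N'_def N0_def ..
  show ?thesis
    using samp_ok approx NLpos unfolding N'eq X_def by blast
qed


end
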